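(* Let $G$ be a mean-payoff game with limited-observation and $\Gamma_G$ its associated reachability game. If $\lambda$ is a winning strategy for Adam or for Eve in $\Gamma_G$, then there exists $N\in\mathbb{N}$ such that every play $\pi$ in $\Gamma_G$ consistent with $\lambda$ has length $|\pi|\le N$.
   Context: An MPG with limited-observation is a tuple $G=\langle Q,q_I,\Sigma,\Delta,w,Obs\rangle$: $Q$ finite, $q_I\in Q$, $\Sigma$ finite, $\Delta\subseteq Q\times\Sigma\times Q$ total, $w:\Delta\to\mathbb{Z}$, $Obs$ a partition of $Q$ with $\{q_I\}\in Obs$ and $\mathrm{post}_\sigma(o)=\{q':\exists q\in o,(q,\sigma,q')\in\Delta\}$ a union of elements of $Obs$ for all $o,\sigma$. Reachability game $\Gamma_G$: $\mathcal{F}$ is the set of $f:Q\to\mathbb{Z}\cup\{+\infty,\bot\}$, $\mathrm{supp}(f)=\{q:f(q)\ne\bot\}$; $f'$ is a $\sigma$-successor of $f$ if $\mathrm{supp}(f')\in Obs$, $\mathrm{supp}(f')\subseteq\mathrm{post}_\sigma(\mathrm{supp}(f))$ and each $f'(q)$, $q\in\mathrm{supp}(f')$, is $\min\{f(q')+w(q',\sigma,q):q'\in\mathrm{supp}(f),(q',\sigma,q)\in\Delta\}$ or $+\infty$. $f\preceq_k f'$ iff $\mathrm{supp}(f)=\mathrm{supp}(f')$ and $f(q)+k\le f'(q)$ on the support ($+\infty+k=+\infty$). $f_I(q_I)=0$, else $\bot$. $\Pi_G$: sequences $f_0\sigma_0\ldots f_n$ with $f_0=f_I$, $f_{i+1}$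 a $\sigma_i$-successor of $f_i$, and $f_i\not\preceq_0f_j$, $f_j\not\preceq_1 f_i$ for $0\le i<j<n$. $\mathcal{T}_\exists$: such sequences with $f_i\preceq_0 f_n$ for some $i<n$; $\mathcal{T}_\forall$: such sequences with, for some $i<n$, $f_n\preceq_1 f_i$ and $f_i(q)\ne+\infty$ for some $q\in\mathrm{supp}(f_i)$. $\Gamma_G$ is played on the tree $\Pi_G$ from $f_I$: at the current sequence $x$, Eve picks $\sigma\in\Sigma$ and Adam picks $f$ with $x\sigma f\in\Pi_G$; the play stops (as a finite play) once it reaches $\mathcal{T}_\exists$ (Eve wins) or $\mathcal{T}_\forall$ (Adam wins); otherwise it may be infinite and won by nobody. A strategy is winning for Eve (Adam) if every play consistent with it reaches $\mathcal{T}_\exists$ ($\mathcal{T}_\forall$). *)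

theory Defs
  imports Main
begin

record ('q, 'a) mpg =
  Q     :: "'q set"
  qI    :: 'q
  Sig   :: "'a set"
  Delta :: "('q \<times> 'a \<times> 'q) set"
  w     :: "'q \<times> 'a \<times> 'q \<Rightarrow> int"
  Obs   :: "'q set set"

definition post :: "('q, 'a, 'z) mpg_scheme \<Rightarrow> 'a \<Rightarrow> 'q set \<Rightarrow> 'q set" where
  "post G \<sigma> S = {q'. \<exists>q\<in>S. (q, \<sigma>, q') \<in> Delta G}"

definition mpg_lo :: "('q, 'a, 'z) mpg_scheme \<Rightarrow> bool" where
  "mpg_lo G \<longleftrightarrow>
     finite (Q G) \<and> qI G \<in> Q G \<and> finite (Sig G) \<and>
     Delta G \<subseteq> Q G \<times> Sig G \<times> Q G \<and>
     (\<forall>q\<in>Q G. \<forall>\<sigma>\<in>Sig G. \<exists>q'. (q, \<sigma>, q') \<in> Delta G) \<and>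
     (\<forall>ob\<in>Obs G. ob \<noteq> {}) \<and> \<Union>(Obs G) = Q G \<and>
     (\<forall>o1\<in>Obs G. \<forall>o2\<in>Obs G. o1 \<noteq> o2 \<longrightarrow> o1 \<inter> o2 = {}) \<and>
     {qI G} \<in> Obs G \<and>
     (\<forall>ob\<in>Obs G. \<forall>\<sigma>\<in>Sig G. \<exists>S\<subseteq>Obs G. post G \<sigma> ob = \<Union>S)"

text \<open>Values in Z \<union> {+\<infinity>}; the value \<bottom> is represented by None.\<close>
datatype val = Fin int | PInf

fun vadd :: "val \<Rightarrow> int \<Rightarrow> val" where
  "vadd (Fin a) k = Fin (a + k)"
| "vadd PInf k = PInf"

fun vle :: "val \<Rightarrow> val \<Rightarrow> bool" where
  "vle (Fin a) (Fin b) = (a \<le> b)"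
| "vle _ PInf = True"
| "vle PInf (Fin _) = False"

type_synonym 'q fn = "'q \<Rightarrow> val option"

definition supp :: "'q fn \<Rightarrow> 'q set" where
  "supp f = {q. f q \<noteq> None}"

definition cands :: "('q, 'a, 'z) mpg_scheme \<Rightarrow> 'a \<Rightarrow> 'q fn \<Rightarrow> 'q \<Rightarrow> val set" where
  "cands G \<sigma> f q = {vadd v (w G (q', \<sigma>, q)) | q' v. f q' = Some v \<and> (q', \<sigma>, q) \<in> Delta G}"

definition is_min :: "val \<Rightarrow> val set \<Rightarrow> bool" where
  "is_min v S \<longleftrightarrow> v \<in> S \<and> (\<forall>u\<in>S. vle v u)"

definition succ :: "('q, 'a, 'z) mpg_scheme \<Rightarrow> 'a \<Rightarrow> 'q fn \<Rightarrow> 'q fn \<Rightarrow> bool" where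
  "succ G \<sigma> f f' \<longleftrightarrow>
     supp f' \<in> Obs G \<and> supp f' \<subseteq> post G \<sigma> (supp f) \<and>
     (\<forall>q\<in>supp f'. f' q = Some PInf \<or> (\<exists>v. f' q = Some v \<and> is_min v (cands G \<sigma> f q)))"

definition preceq :: "int \<Rightarrow> 'q fn \<Rightarrow> 'q fn \<Rightarrow> bool" where
  "preceq k f f' \<longleftrightarrow> supp f = supp f' \<and>
     (\<forall>q\<in>supp f. \<exists>a b. f q = Some a \<and> f' q = Some b \<and> vle (vadd a k) b)"

definition fI :: "('q, 'a, 'z) mpg_scheme \<Rightarrow> 'q fn" where
  "fI G = (\<lambda>q. if q = qI G then Some (Fin 0) else None)"

text \<open>A node f_0 \<sigma>_0 f_1 ... \<sigma>_{n-1} f_n of the tree (with f_0 = f_I) is represented by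
  the list [(\<sigma>_0,f_1), ..., (\<sigma>_{n-1},f_n)]; its length is n.\<close>
type_synonym ('q, 'a) node = "('a \<times> 'q fn) list"

definition fseq :: "('q, 'a, 'z) mpg_scheme \<Rightarrow> ('q, 'a) node \<Rightarrow> nat \<Rightarrow> 'q fn" where
  "fseq G x i = (if i = 0 then fI G else snd (x ! (i - 1)))"

definition inPi :: "('q, 'a, 'z) mpg_scheme \<Rightarrow> ('q, 'a) node \<Rightarrow> bool" where
  "inPi G x \<longleftrightarrow>
     (\<forall>i<length x. fst (x ! i) \<in> Sig G \<and> succ G (fst (x ! i)) (fseq G x i) (fseq G x (Suc i))) \<and>
     (\<forall>i j. i < j \<and> j < length x \<longrightarrow>
        \<not> preceq 0 (fseq G x i) (fseq G x j) \<and> \<not> preceq 1 (fseq G x j) (fseq G x i))"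

definition TE :: "('q, 'a, 'z) mpg_scheme \<Rightarrow> ('q, 'a) node \<Rightarrow> bool" where
  "TE G x \<longleftrightarrow> inPi G x \<and> (\<exists>i<length x. preceq 0 (fseq G x i) (fseq G x (length x)))"

definition TA :: "('q, 'a, 'z) mpg_scheme \<Rightarrow> ('q, 'a) node \<Rightarrow> bool" where
  "TA G x \<longleftrightarrow> inPi G x \<and> (\<exists>i<length x. preceq 1 (fseq G x (length x)) (fseq G x i) \<and>
                                 (\<exists>q\<in>supp (fseq G x i). fseq G x i q \<noteq> Some PInf))"

text \<open>Plays consistent with a strategy; the strategy is encoded as a predicate
  ok x \<sigma> f saying that extending the history x by (\<sigma>, f) agrees with the strategy.\<close>
definition cons_path :: "('q, 'a, 'z) mpg_scheme \<Rightarrow> (('q, 'a) node \<Rightarrow> 'a \<Rightarrow> 'q fn \<Rightarrow> bool)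
    \<Rightarrow> ('q, 'a) node \<Rightarrow> bool" where
  "cons_path G ok x \<longleftrightarrow> inPi G x \<and>
     (\<forall>k<length x. ok (take k x) (fst (x ! k)) (snd (x ! k))) \<and>
     (\<forall>k<length x. \<not> TE G (take k x) \<and> \<not> TA G (take k x))"

definition fin_play :: "('q, 'a, 'z) mpg_scheme \<Rightarrow> (('q, 'a) node \<Rightarrow> 'a \<Rightarrow> 'q fn \<Rightarrow> bool)
    \<Rightarrow> ('q, 'a) node \<Rightarrow> bool" where
  "fin_play G ok x \<longleftrightarrow> cons_path G ok x \<and>
     (TE G x \<or> TA G x \<or> \<not> (\<exists>\<sigma> f. ok x \<sigma> f \<and> inPi G (x @ [(\<sigma>, f)])))"

definition inf_play :: "('q, 'a, 'z) mpg_scheme \<Rightarrow> (('q, 'a) node \<Rightarrow> 'a \<Rightarrow> 'q fn \<Rightarrow> bool)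
    \<Rightarrow> (nat \<Rightarrow> 'a \<times> 'q fn) \<Rightarrow> bool" where
  "inf_play G ok \<rho> \<longleftrightarrow> (\<forall>k. cons_path G ok (map \<rho> [0..<k]))"

definition eve_strategy :: "('q, 'a, 'z) mpg_scheme \<Rightarrow> (('q, 'a) node \<Rightarrow> 'a) \<Rightarrow> bool" where
  "eve_strategy G sE \<longleftrightarrow> (\<forall>x. inPi G x \<longrightarrow> sE x \<in> Sig G)"

definition adam_strategy :: "('q, 'a, 'z) mpg_scheme \<Rightarrow> (('q, 'a) node \<Rightarrow> 'a \<Rightarrow> 'q fn) \<Rightarrow> bool" where
  "adam_strategy G sA \<longleftrightarrow>
     (\<forall>x \<sigma> f. inPi G (x @ [(\<sigma>, f)]) \<longrightarrow> inPi G (x @ [(\<sigma>, sA x \<sigma>)]))"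

definition eve_ok :: "(('q, 'a) node \<Rightarrow> 'a) \<Rightarrow> ('q, 'a) node \<Rightarrow> 'a \<Rightarrow> 'q fn \<Rightarrow> bool" where
  "eve_ok sE x \<sigma> f \<longleftrightarrow> \<sigma> = sE x"

definition adam_ok :: "(('q, 'a) node \<Rightarrow> 'a \<Rightarrow> 'q fn) \<Rightarrow> ('q, 'a) node \<Rightarrow> 'a \<Rightarrow> 'q fn \<Rightarrow> bool" where
  "adam_ok sA x \<sigma> f \<longleftrightarrow> f = sA x \<sigma>"

definition winning :: "('q, 'a, 'z) mpg_scheme \<Rightarrow> (('q, 'a) node \<Rightarrow> 'a \<Rightarrow> 'q fn \<Rightarrow> bool)
    \<Rightarrow> (('q, 'a, 'z) mpg_scheme \<Rightarrow> ('q, 'a) node \<Rightarrow> bool) \<Rightarrow> bool" where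
  "winning G ok T \<longleftrightarrow> (\<nexists>\<rho>. inf_play G ok \<rho>) \<and> (\<forall>x. fin_play G ok x \<longrightarrow> T G x)"

end

theory Submission
  imports Defs
begin

lemma koenig_finite:
  fixes P :: "'b list \<Rightarrow> bool"
  assumes pre: "\<And>xs ys. P (xs @ ys) \<Longrightarrow> P xs"
    and fb: "\<And>xs. finite {a. P (xs @ [a])}"
    and noinf: "\<nexists>\<rho>. \<forall>k. P (map \<rho> [0..<k])"
    and P0: "P []"
  shows "finite {xs. P xs}"
proof (rule ccontr)
  assume inf0: "infinite {xs. P xs}"
  define D where "D xs = {ys. P (xs @ ys)}" for xs
  have step: "\<exists>a. P (xs @ [a]) \<and> infinite (D (xs @ [a]))" if "infinite (D xs)" for xs
  proof (rule ccontr)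
    assume na: "\<not> (\<exists>a. P (xs @ [a]) \<and> infinite (D (xs @ [a])))"
    have "D xs \<subseteq> {[]} \<union> (\<Union>a\<in>{a. P (xs @ [a])}. (\<lambda>ys. a # ys) ` D (xs @ [a]))"
    proof
      fix ys assume "ys \<in> D xs"
      then show "ys \<in> {[]} \<union> (\<Union>a\<in>{a. P (xs @ [a])}. (\<lambda>ys. a # ys) ` D (xs @ [a]))"
      proof (cases ys)
        case (Cons a zs)
        with \<open>ys \<in> D xs\<close> have "P ((xs @ [a]) @ zs)" by (simp add: D_def)
        then have "P (xs @ [a])" "zs \<in> D (xs @ [a])" using pre by (auto simp: D_def)
        then show ?thesis using Cons by auto
      qed simp
    qed
    moreover have "finite ({[]} \<union> (\<Union>a\<in>{a. P (xs @ [a])}. (\<lambda>ys. a # ys) ` D (xs @ [a])))"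
      using fb[of xs] na by auto
    ultimately show False using that finite_subset by blast
  qed
  define ch where "ch xs = (SOME a. P (xs @ [a]) \<and> infinite (D (xs @ [a])))" for xs
  define path where "path = rec_nat [] (\<lambda>n p. p @ [ch p])"
  have path0: "path 0 = []" and pathS: "\<And>n. path (Suc n) = path n @ [ch (path n)]"
    by (simp_all add: path_def)
  have inv: "P (path n) \<and> infinite (D (path n))" for n
  proof (induction n)
    case 0 then show ?case using inf0 P0 by (simp add: path0 D_def)
  next
    case (Suc n)
    then have "P (path n @ [ch (path n)]) \<and> infinite (D (path n @ [ch (path n)]))"
      unfolding ch_def using step by (metis (no_types, lifting) someI_ex)
    then show ?case by (simp add: pathS)
  qed
  define \<rho> where "\<rho> n = ch (path n)" for n
  have "map \<rho> [0..<k] = path k" for k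
    by (induction k) (simp_all add: path0 pathS \<rho>_def)
  then have "\<forall>k. P (map \<rho> [0..<k])" using inv by simp
  with noinf show False by blast
qed

lemma fseq_append:
  assumes "i \<le> length xs"
  shows "fseq G (xs @ ys) i = fseq G xs i"
  using assms by (auto simp: fseq_def nth_append)

lemma inPi_prefix:
  assumes "inPi G (xs @ ys)"
  shows "inPi G xs"
proof -
  have A: "\<forall>i<length xs. fst (xs ! i) \<in> Sig G \<and> succ G (fst (xs ! i)) (fseq G xs i) (fseq G xs (Suc i))"
  proof (intro allI impI)
    fix i assume i: "i < length xs"
    from assms i have "fst ((xs@ys) ! i) \<in> Sig G \<and> succ G (fst ((xs@ys) ! i)) (fseq G (xs@ys) i) (fseq G (xs@ys) (Suc i))"
      unfolding inPi_def by auto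
    then show "fst (xs ! i) \<in> Sig G \<and> succ G (fst (xs ! i)) (fseq G xs i) (fseq G xs (Suc i))"
      using i by (simp add: nth_append fseq_append)
  qed
  have B: "\<forall>i j. i < j \<and> j < length xs \<longrightarrow>
        \<not> preceq 0 (fseq G xs i) (fseq G xs j) \<and> \<not> preceq 1 (fseq G xs j) (fseq G xs i)"
  proof (intro allI impI)
    fix i j assume ij: "i < j \<and> j < length xs"
    with assms have "\<not> preceq 0 (fseq G (xs@ys) i) (fseq G (xs@ys) j) \<and> \<not> preceq 1 (fseq G (xs@ys) j) (fseq G (xs@ys) i)"
      unfolding inPi_def by auto
    then show "\<not> preceq 0 (fseq G xs i) (fseq G xs j) \<and> \<not> preceq 1 (fseq G xs j) (fseq G xs i)"
      using ij by (simp add: fseq_append)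
  qed
  from A B show ?thesis unfolding inPi_def by blast
qed

lemma cons_path_prefix:
  assumes "cons_path G ok (xs @ ys)"
  shows "cons_path G ok xs"
proof -
  have "inPi G xs" using assms inPi_prefix unfolding cons_path_def by blast
  moreover have "\<forall>k<length xs. ok (take k xs) (fst (xs ! k)) (snd (xs ! k))"
  proof (intro allI impI)
    fix k assume k: "k < length xs"
    from assms have "\<forall>k<length (xs@ys). ok (take k (xs@ys)) (fst ((xs@ys) ! k)) (snd ((xs@ys) ! k))"
      unfolding cons_path_def by blast
    moreover have "k < length (xs@ys)" using k by simp
    ultimately have "ok (take k (xs@ys)) (fst ((xs@ys) ! k)) (snd ((xs@ys) ! k))" by blast
    then show "ok (take k xs) (fst (xs ! k)) (snd (xs ! k))" using k by (simp add: nth_append)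
  qed
  moreover have "\<forall>k<length xs. \<not> TE G (take k xs) \<and> \<not> TA G (take k xs)"
  proof (intro allI impI)
    fix k assume k: "k < length xs"
    from assms have "\<forall>k<length (xs@ys). \<not> TE G (take k (xs@ys)) \<and> \<not> TA G (take k (xs@ys))"
      unfolding cons_path_def by blast
    moreover have "k < length (xs@ys)" using k by simp
    ultimately have "\<not> TE G (take k (xs@ys)) \<and> \<not> TA G (take k (xs@ys))" by blast
    then show "\<not> TE G (take k xs) \<and> \<not> TA G (take k xs)" using k by simp
  qed
  ultimately show ?thesis unfolding cons_path_def by blast
qed

lemma lo_facts:
  assumes "mpg_lo G"
  shows "finite (Q G)" "finite (Sig G)" "Delta G \<subseteq> Q G \<times> Sig G \<times> Q G" "\<Union>(Obs G) = Q G"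
proof -
  from assms have A: "finite (Q G) \<and> qI G \<in> Q G \<and> finite (Sig G) \<and>
     Delta G \<subseteq> Q G \<times> Sig G \<times> Q G \<and> (\<forall>q\<in>Q G. \<forall>\<sigma>\<in>Sig G. \<exists>q'. (q, \<sigma>, q') \<in> Delta G) \<and>
     (\<forall>ob\<in>Obs G. ob \<noteq> {}) \<and> \<Union>(Obs G) = Q G \<and>
     (\<forall>o1\<in>Obs G. \<forall>o2\<in>Obs G. o1 \<noteq> o2 \<longrightarrow> o1 \<inter> o2 = {}) \<and>
     {qI G} \<in> Obs G \<and>
     (\<forall>ob\<in>Obs G. \<forall>\<sigma>\<in>Sig G. \<exists>S\<subseteq>Obs G. post G \<sigma> ob = \<Union>S)"
    unfolding mpg_lo_def by assumption
  show "finite (Q G)" using A by (elim conjE) assumption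
  show "finite (Sig G)" using A by (elim conjE) assumption
  show "Delta G \<subseteq> Q G \<times> Sig G \<times> Q G" using A by (elim conjE) assumption
  show "\<Union>(Obs G) = Q G" using A by (elim conjE) assumption
qed

lemma cands_finite:
  assumes "mpg_lo G"
  shows "finite (cands G \<sigma> g q)"
proof -
  have "cands G \<sigma> g q \<subseteq> (\<lambda>q'. vadd (the (g q')) (w G (q', \<sigma>, q))) ` Q G"
  proof
    fix v assume "v \<in> cands G \<sigma> g q"
    then obtain q' u where h: "v = vadd u (w G (q', \<sigma>, q))" "g q' = Some u" "(q', \<sigma>, q) \<in> Delta G"
      unfolding cands_def by blast
    have D: "Delta G \<subseteq> Q G \<times> Sig G \<times> Q G" using lo_facts[OF assms] by blast
    have q': "q' \<in> Q G" using h(3) D by blast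
    have "v = vadd (the (g q')) (w G (q', \<sigma>, q))" using h by simp
    then show "v \<in> (\<lambda>q'. vadd (the (g q')) (w G (q', \<sigma>, q))) ` Q G" using q' by (rule image_eqI)
  qed
  moreover have "finite (Q G)" using lo_facts[OF assms] by blast
  ultimately show ?thesis by (meson finite_subset finite_imageI)
qed

lemma succ_finite:
  assumes "mpg_lo G"
  shows "finite {f. succ G \<sigma> g f}"
proof -
  define B where "B = {None, Some PInf} \<union> Some ` (\<Union>q\<in>Q G. cands G \<sigma> g q)"
  have fQ: "finite (Q G)" using lo_facts[OF assms] by blast
  have "finite (\<Union>q\<in>Q G. cands G \<sigma> g q)" using fQ cands_finite[OF assms] by (intro finite_UN_I)
  then have fB: "finite B" unfolding B_def by simp
  have "{f. succ G \<sigma> g f} \<subseteq> {f. \<forall>x. (x \<in> Q G \<longrightarrow> f x \<in> B) \<and> (x \<notin> Q G \<longrightarrow> f x = None)}"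
  proof
    fix f assume "f \<in> {f. succ G \<sigma> g f}"
    then have s: "succ G \<sigma> g f" by simp
    have o: "supp f \<in> Obs G" using s unfolding succ_def by blast
    have u: "\<Union>(Obs G) = Q G" using lo_facts[OF assms] by blast
    have sQ: "supp f \<subseteq> Q G" using o u by blast
    have "f x \<in> B \<and> (x \<notin> Q G \<longrightarrow> f x = None)" for x
    proof (cases "x \<in> supp f")
      case True
      then have "x \<in> Q G" using sQ by blast
      have "f x = Some PInf \<or> (\<exists>v. f x = Some v \<and> is_min v (cands G \<sigma> g x))"
        using s True unfolding succ_def by blast
      then have "f x \<in> B"
      proof
        assume "f x = Some PInf" then show ?thesis unfolding B_def by simp
      next
        assume "\<exists>v. f x = Some v \<and> is_min v (cands G \<sigma> g x)"
        then obtain v where v: "f x = Some v" "v \<in> cands G \<sigma> g x" unfolding is_min_def by blast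
        then have "v \<in> (\<Union>q\<in>Q G. cands G \<sigma> g q)" using \<open>x \<in> Q G\<close> by blast
        then show ?thesis using v(1) unfolding B_def by blast
      qed
      then show ?thesis using \<open>x \<in> Q G\<close> by blast
    next
      case False
      then have "f x = None" unfolding supp_def by simp
      then show ?thesis unfolding B_def by simp
    qed
    then show "f \<in> {f. \<forall>x. (x \<in> Q G \<longrightarrow> f x \<in> B) \<and> (x \<notin> Q G \<longrightarrow> f x = None)}" by blast
  qed
  moreover have "finite {f. \<forall>x. (x \<in> Q G \<longrightarrow> f x \<in> B) \<and> (x \<notin> Q G \<longrightarrow> f x = None)}"
    by (rule finite_set_of_finite_funs[OF fQ fB])
  ultimately show ?thesis using finite_subset by blast
qed

lemma cons_path_bounded:
  assumes G: "mpg_lo G" and noinf: "\<nexists>\<rho>. inf_play G ok \<rho>"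
  shows "\<exists>N::nat. \<forall>x. cons_path G ok x \<longrightarrow> length x \<le> N"
proof -
  have fin: "finite {xs. cons_path G ok xs}"
  proof (rule koenig_finite)
    show "cons_path G ok xs" if "cons_path G ok (xs @ ys)" for xs ys
      using that cons_path_prefix by blast
    show "finite {a. cons_path G ok (xs @ [a])}" for xs
    proof -
      have "{a. cons_path G ok (xs @ [a])} \<subseteq> (\<Union>\<sigma>\<in>Sig G. Pair \<sigma> ` {f. succ G \<sigma> (fseq G xs (length xs)) f})"
      proof
        fix a assume "a \<in> {a. cons_path G ok (xs @ [a])}"
        then have "inPi G (xs @ [a])" unfolding cons_path_def by simp
        then have "\<forall>i<length (xs@[a]). fst ((xs@[a]) ! i) \<in> Sig G \<and> succ G (fst ((xs@[a]) ! i)) (fseq G (xs@[a]) i) (fseq G (xs@[a]) (Suc i))"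
          unfolding inPi_def by blast
        then have "fst ((xs@[a]) ! length xs) \<in> Sig G \<and> succ G (fst ((xs@[a]) ! length xs)) (fseq G (xs@[a]) (length xs)) (fseq G (xs@[a]) (Suc (length xs)))"
          by (metis length_append_singleton lessI)
        then have "fst a \<in> Sig G \<and> succ G (fst a) (fseq G (xs@[a]) (length xs)) (fseq G (xs@[a]) (Suc (length xs)))"
          by simp
        moreover have "fseq G (xs@[a]) (length xs) = fseq G xs (length xs)" by (simp add: fseq_append)
        moreover have "fseq G (xs@[a]) (Suc (length xs)) = snd a" by (simp add: fseq_def)
        ultimately show "a \<in> (\<Union>\<sigma>\<in>Sig G. Pair \<sigma> ` {f. succ G \<sigma> (fseq G xs (length xs)) f})"
          by (intro UN_I[of "fst a"]) (auto intro!: image_eqI[of a _ "snd a"])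
      qed
      moreover have "finite (Sig G)" using lo_facts[OF G] by blast
      moreover have "finite (\<Union>\<sigma>\<in>Sig G. Pair \<sigma> ` {f. succ G \<sigma> (fseq G xs (length xs)) f})"
        using \<open>finite (Sig G)\<close> by (intro finite_UN_I) (simp_all add: succ_finite[OF G])
      ultimately show ?thesis by (meson finite_subset)
    qed
    show "\<nexists>\<rho>. \<forall>k. cons_path G ok (map \<rho> [0..<k])" using noinf unfolding inf_play_def by blast
    show "cons_path G ok []" unfolding cons_path_def inPi_def by simp
  qed
  show ?thesis
  proof (intro exI allI impI)
    fix x assume "cons_path G ok x"
    then have "length x \<in> length ` {xs. cons_path G ok xs}" by blast
    then show "length x \<le> Max (length ` {xs. cons_path G ok xs})" using fin by simp
  qed
qed

theorem lemma2:
  fixes G :: "('q, 'a) mpg"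
    and sE :: "('q, 'a) node \<Rightarrow> 'a"
    and sA :: "('q, 'a) node \<Rightarrow> 'a \<Rightarrow> 'q fn"
  assumes "mpg_lo G"
  shows "(eve_strategy G sE \<and> winning G (eve_ok sE) TE \<longrightarrow>
            (\<exists>N::nat. \<forall>x. fin_play G (eve_ok sE) x \<longrightarrow> length x \<le> N))
       \<and> (adam_strategy G sA \<and> winning G (adam_ok sA) TA \<longrightarrow>
            (\<exists>N::nat. \<forall>x. fin_play G (adam_ok sA) x \<longrightarrow> length x \<le> N))"
proof (intro conjI impI)
  assume "eve_strategy G sE \<and> winning G (eve_ok sE) TE"
  then obtain N where N: "\<forall>x. cons_path G (eve_ok sE) x \<longrightarrow> length x \<le> N"
    using cons_path_bounded[OF assms, of "eve_ok sE"] unfolding winning_def by blast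
  show "\<exists>N::nat. \<forall>x. fin_play G (eve_ok sE) x \<longrightarrow> length x \<le> N"
    using N unfolding fin_play_def by blast
next
  assume "adam_strategy G sA \<and> winning G (adam_ok sA) TA"
  then obtain N where N: "\<forall>x. cons_path G (adam_ok sA) x \<longrightarrow> length x \<le> N"
    using cons_path_bounded[OF assms, of "adam_ok sA"] unfolding winning_def by blast
  show "\<exists>N::nat. \<forall>x. fin_play G (adam_ok sA) x \<longrightarrow> length x \<le> N"
    using N unfolding fin_play_def by blast
qed

end
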